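(* Let $N\ge5$, $N\not\equiv1\pmod3$. For a generic twisted $(N,1)$ spiral, the shift map satisfies $\mathcal S(A_i)=A_{i+1}$ for $i=0,1,\dots,N-2$; that is, $\widehat c_{i+1}+\widehat a_{i+1}\widehat b_i=c_{i+1}+a_{i+1}b_i$ for these $i$.
   Context: Points lie in $\mathbb{RP}^2$; $M\in PSL(3,\mathbb R)$ is identified with a representing matrix in $SL(3,\mathbb R)$. For a bi-infinite sequence $(p_k)_{k\in\mathbb Z}$ in $\mathbb{RP}^2$, $T(p_k)=\overline{p_{k-1}p_{k+1}}\cap\overline{p_kp_{k+2}}$. A twisted $(N,1)$ pentagram spiral with monodromy $M$ is a bi-infinite sequence $(p_k)$ with $p_{N+k}=M\cdot T(p_{k-1})$ for all $k$, such that $p_{N+1}$ lies on the segment joining $p_N$ and $M\cdot p_1$; its seed is $\{p_1,\dots,p_N;p_{N+1}\}$; "generic" means all determinants and denominators appearing are nonzero. For vectors define $T(V_i)=(V_{i-1}\times V_{i+1})\times(V_i\times V_{i+2})$, $\overline T(V_i)=c_{i+1}(V_i\times V_{i+1})\times(V_{i-2}\times V_{i-1})$, $c_i=\det(V_{i+1},V_{i+2},V_{i+3})/\det(V_i,V_{i+1},V_{i+2})$. The normalized lift is the unique sequence $V_k$ with $[V_k]=p_k$, $V_{N+i}=MT(V_{i-1})$ and $V_{-i}=M^{-1}\overline T(V_{N-i+1})$ for $i\ge1$, and $\det(V_i,V_{i+1},V_{i+2})=1$ for $i=0,\dots,N$. Invariants: $V_{i+3}=a_iV_{i+2}+b_iV_{i+1}+c_iV_i$;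 $A_i=c_i+a_ib_{i-1}$. The shift map $\mathcal S$ sends the spiral to the same sequence with seed $\{p_2,\dots,p_{N+1};p_{N+2}\}$, whose normalized lift $(\widehat V_i)$ satisfies $[\widehat V_i]=p_i$, $\det(\widehat V_i,\widehat V_{i+1},\widehat V_{i+2})=1$ for $i=1,\dots,N+1$, $\widehat V_{N+1+i}=MT(\widehat V_i)$, $\widehat V_{1-i}=M^{-1}\overline T(\widehat V_{N+2-i})$ for $i\ge1$; hatted invariants are defined by $\widehat V_{i+3}=\widehat a_i\widehat V_{i+2}+\widehat b_i\widehat V_{i+1}+\widehat c_i\widehat V_i$. In coordinates $\mathcal S(a_i)=\widehat a_{i+1}$, $\mathcal S(b_i)=\widehat b_{i+1}$, $\mathcal S(c_i)=\widehat c_{i+1}$. *)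

theory Defs
  imports "HOL-Analysis.Analysis"
begin

text \<open>Points of RP^2 are represented by nonzero vectors of real^3; two vectors
represent the same point iff they are nonzero and proportional.\<close>

definition proj_eq :: "real^3 \<Rightarrow> real^3 \<Rightarrow> bool" where
  "proj_eq u v \<longleftrightarrow> u \<noteq> 0 \<and> v \<noteq> 0 \<and> (\<exists>t. t \<noteq> 0 \<and> u = t *\<^sub>R v)"

definition det3 :: "real^3 \<Rightarrow> real^3 \<Rightarrow> real^3 \<Rightarrow> real" where
  "det3 u v w = det (vector [u, v, w] :: real^3^3)"

definition Tv :: "(int \<Rightarrow> real^3) \<Rightarrow> int \<Rightarrow> real^3" where
  "Tv V i = cross3 (cross3 (V (i - 1)) (V (i + 1))) (cross3 (V i) (V (i + 2)))"

definition cinv :: "(int \<Rightarrow> real^3) \<Rightarrow> int \<Rightarrow> real" where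
  "cinv V i = det3 (V (i + 1)) (V (i + 2)) (V (i + 3)) / det3 (V i) (V (i + 1)) (V (i + 2))"

definition Tbar :: "(int \<Rightarrow> real^3) \<Rightarrow> int \<Rightarrow> real^3" where
  "Tbar V i = cinv V (i + 1) *\<^sub>R cross3 (cross3 (V i) (V (i + 1))) (cross3 (V (i - 2)) (V (i - 1)))"

text \<open>Generic twisted (N,1) pentagram spiral with monodromy M, given by
representative vectors p k of the points p_k.  The point T(p_k) is the class of
the vector Tv p k (intersection of the lines p_{k-1}p_{k+1} and p_k p_{k+2}).\<close>
definition generic_twisted_spiral :: "nat \<Rightarrow> real^3^3 \<Rightarrow> (int \<Rightarrow> real^3) \<Rightarrow> bool" where
  "generic_twisted_spiral N M p \<longleftrightarrow>
     det M = 1 \<and>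
     (\<forall>k. p k \<noteq> 0) \<and>
     (\<forall>k. det3 (p k) (p (k + 1)) (p (k + 2)) \<noteq> 0) \<and>
     (\<forall>k. proj_eq (p (int N + k)) (M *v Tv p (k - 1))) \<and>
     det3 (p (int N)) (p (int N + 1)) (M *v p 1) = 0"

text \<open>Normalized lift of the spiral for the seed {p_1..p_N; p_{N+1}}.\<close>
definition normalized_lift :: "nat \<Rightarrow> real^3^3 \<Rightarrow> (int \<Rightarrow> real^3) \<Rightarrow> (int \<Rightarrow> real^3) \<Rightarrow> bool" where
  "normalized_lift N M p V \<longleftrightarrow>
     (\<forall>k. proj_eq (V k) (p k)) \<and>
     (\<forall>i::int. 1 \<le> i \<longrightarrow> V (int N + i) = M *v Tv V (i - 1)) \<and>
     (\<forall>i::int. 1 \<le> i \<longrightarrow> V (- i) = matrix_inv M *v Tbar V (int N - i + 1)) \<and>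
     (\<forall>i::int. 0 \<le> i \<and> i \<le> int N \<longrightarrow> det3 (V i) (V (i + 1)) (V (i + 2)) = 1)"

text \<open>Normalized lift of the shifted spiral (seed {p_2..p_{N+1}; p_{N+2}}).\<close>
definition shifted_normalized_lift :: "nat \<Rightarrow> real^3^3 \<Rightarrow> (int \<Rightarrow> real^3) \<Rightarrow> (int \<Rightarrow> real^3) \<Rightarrow> bool" where
  "shifted_normalized_lift N M p W \<longleftrightarrow>
     (\<forall>k. proj_eq (W k) (p k)) \<and>
     (\<forall>i::int. 1 \<le> i \<longrightarrow> W (int N + 1 + i) = M *v Tv W i) \<and>
     (\<forall>i::int. 1 \<le> i \<longrightarrow> W (1 - i) = matrix_inv M *v Tbar W (int N + 2 - i)) \<and>
     (\<forall>i::int. 1 \<le> i \<and> i \<le> int N + 1 \<longrightarrow> det3 (W i) (W (i + 1)) (W (i + 2)) = 1)"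

definition invariants :: "(int \<Rightarrow> real^3) \<Rightarrow> (int \<Rightarrow> real) \<Rightarrow> (int \<Rightarrow> real) \<Rightarrow> (int \<Rightarrow> real) \<Rightarrow> bool" where
  "invariants V a b c \<longleftrightarrow>
     (\<forall>i. V (i + 3) = a i *\<^sub>R V (i + 2) + b i *\<^sub>R V (i + 1) + c i *\<^sub>R V i)"

end

theory Submission
  imports Defs
begin

lemma det3_expand:
  "det3 u v w = (u$1)*(v$2)*(w$3) - (u$1)*(v$3)*(w$2) - (u$2)*(v$1)*(w$3) + (u$2)*(v$3)*(w$1) + (u$3)*(v$1)*(w$2) - (u$3)*(v$2)*(w$1)"
  unfolding det3_def det_3 by (simp add: vector_1 vector_2 vector_3 algebra_simps)

lemma det3_scale:
  "det3 (x *\<^sub>R u) (y *\<^sub>R v) (z *\<^sub>R w) = x*y*z*det3 u v w"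
  unfolding det3_expand by (simp add: algebra_simps)

lemma indep3:
  assumes "det3 u v w \<noteq> 0" and "x *\<^sub>R u + y *\<^sub>R v + z *\<^sub>R w = 0"
  shows "x = 0 \<and> y = 0 \<and> z = 0"
proof -
  have e1: "x*(u$1) + y*(v$1) + z*(w$1) = 0" "x*(u$2) + y*(v$2) + z*(w$2) = 0" "x*(u$3) + y*(v$3) + z*(w$3) = 0"
    using arg_cong[OF assms(2), of "\<lambda>q. q$1"] arg_cong[OF assms(2), of "\<lambda>q. q$2"]
      arg_cong[OF assms(2), of "\<lambda>q. q$3"] by simp_all
  have "x * det3 u v w = 0" "y * det3 u v w = 0" "z * det3 u v w = 0"
    unfolding det3_expand using e1 by algebra+
  thus ?thesis using assms(1) by simp
qed

lemma lam_exists: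
  assumes "\<forall>k. proj_eq (V k) (p k)" "\<forall>k. proj_eq (W k) (p k)"
  shows "\<exists>l. \<forall>k. W k = l k *\<^sub>R V k \<and> l k \<noteq> 0"
proof -
  have "\<forall>k. \<exists>t. W k = t *\<^sub>R V k \<and> t \<noteq> 0"
  proof
    fix k
    obtain s where s: "s \<noteq> 0" "V k = s *\<^sub>R p k" using assms(1) unfolding proj_eq_def by blast
    obtain t where t: "t \<noteq> 0" "W k = t *\<^sub>R p k" using assms(2) unfolding proj_eq_def by blast
    have "W k = (t/s) *\<^sub>R V k" using s t by simp
    thus "\<exists>t. W k = t *\<^sub>R V k \<and> t \<noteq> 0" using s t by (intro exI[of _ "t/s"]) simp
  qed
  thus ?thesis by (rule choice)
qed

theorem mainTheorem13:
  fixes N :: nat and M :: "real^3^3" and p V W :: "int \<Rightarrow> real^3"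
    and a b c ah bh ch :: "int \<Rightarrow> real"
  assumes "N \<ge> 5" and "N mod 3 \<noteq> 1"
    and "generic_twisted_spiral N M p"
    and "normalized_lift N M p V"
    and "shifted_normalized_lift N M p W"
    and "invariants V a b c"
    and "invariants W ah bh ch"
  shows "\<forall>i::int. 0 \<le> i \<and> i \<le> int N - 2 \<longrightarrow>
           ch (i + 1) + ah (i + 1) * bh i = c (i + 1) + a (i + 1) * b i"
proof (intro allI impI)
  fix i :: int assume i: "0 \<le> i \<and> i \<le> int N - 2"
  have pV: "\<forall>k. proj_eq (V k) (p k)" using assms(4) unfolding normalized_lift_def by blast
  have pW: "\<forall>k. proj_eq (W k) (p k)" using assms(5) unfolding shifted_normalized_lift_def by blast
  obtain l where l0: "\<forall>k. W k = l k *\<^sub>R V k \<and> l k \<noteq> 0"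
    using lam_exists[OF pV pW] by blast
  have l: "\<And>k. W k = l k *\<^sub>R V k" "\<And>k. l k \<noteq> 0" using l0 by auto
  have dV: "\<And>j. 0 \<le> j \<Longrightarrow> j \<le> int N \<Longrightarrow> det3 (V j) (V (j+1)) (V (j+2)) = 1"
    using assms(4) unfolding normalized_lift_def by blast
  have dW: "\<And>j. 1 \<le> j \<Longrightarrow> j \<le> int N + 1 \<Longrightarrow> det3 (W j) (W (j+1)) (W (j+2)) = 1"
    using assms(5) unfolding shifted_normalized_lift_def by blast
  have prod1: "\<And>j. 1 \<le> j \<Longrightarrow> j \<le> int N \<Longrightarrow> l j * l (j+1) * l (j+2) = 1"
  proof -
    fix j :: int assume "1 \<le> j" "j \<le> int N"
    hence "det3 (W j) (W (j+1)) (W (j+2)) = 1" "det3 (V j) (V (j+1)) (V (j+2)) = 1"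
      using dV dW by auto
    thus "l j * l (j+1) * l (j+2) = 1" by (simp only: l(1) det3_scale)
  qed
  have per: "l (i+4) = l (i+1)"
  proof -
    have "l (i+1) * l (i+2) * l (i+3) = 1" using prod1[of "i+1"] i by (simp add: add.assoc)
    moreover have "l (i+2) * l (i+3) * l (i+4) = 1" using prod1[of "i+2"] i assms(1)
      by (simp add: add.assoc)
    ultimately show ?thesis
    proof -
      assume h1: "l (i+1) * l (i+2) * l (i+3) = 1" and h2: "l (i+2) * l (i+3) * l (i+4) = 1"
      have "(l (i+2) * l (i+3)) * l (i+4) = (l (i+2) * l (i+3)) * l (i+1)"
        using h1 h2 by (simp add: algebra_simps)
      moreover have "l (i+2) * l (i+3) \<noteq> 0" using l(2) by simp
      ultimately show ?thesis by simp
    qed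
  qed
  have coef: "\<And>j. 0 \<le> j \<Longrightarrow> j \<le> int N \<Longrightarrow>
      l (j+3) * a j = ah j * l (j+2) \<and> l (j+3) * b j = bh j * l (j+1) \<and> l (j+3) * c j = ch j * l j"
  proof -
    fix j :: int assume j: "0 \<le> j" "j \<le> int N"
    have v: "V (j+3) = a j *\<^sub>R V (j+2) + b j *\<^sub>R V (j+1) + c j *\<^sub>R V j"
      using assms(6) unfolding invariants_def by blast
    have w: "W (j+3) = ah j *\<^sub>R W (j+2) + bh j *\<^sub>R W (j+1) + ch j *\<^sub>R W j"
      using assms(7) unfolding invariants_def by blast
    have "(l (j+3) * a j - ah j * l (j+2)) *\<^sub>R V (j+2) + (l (j+3) * b j - bh j * l (j+1)) *\<^sub>R V (j+1)
          + (l (j+3) * c j - ch j * l j) *\<^sub>R V j = 0"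
    proof -
      have "l (j+3) *\<^sub>R V (j+3) = ah j *\<^sub>R (l (j+2) *\<^sub>R V (j+2)) + bh j *\<^sub>R (l (j+1) *\<^sub>R V (j+1)) + ch j *\<^sub>R (l j *\<^sub>R V j)"
        using w by (simp only: l(1))
      hence "l (j+3) *\<^sub>R (a j *\<^sub>R V (j+2) + b j *\<^sub>R V (j+1) + c j *\<^sub>R V j) =
             ah j *\<^sub>R (l (j+2) *\<^sub>R V (j+2)) + bh j *\<^sub>R (l (j+1) *\<^sub>R V (j+1)) + ch j *\<^sub>R (l j *\<^sub>R V j)"
        using v by simp
      thus ?thesis by (simp add: algebra_simps)
    qed
    moreover have "det3 (V (j+2)) (V (j+1)) (V j) \<noteq> 0"
    proof -
      have "det3 (V (j+2)) (V (j+1)) (V j) = - det3 (V j) (V (j+1)) (V (j+2))"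
        unfolding det3_expand by (simp add: algebra_simps)
      thus ?thesis using dV[OF j] by simp
    qed
    ultimately have "l (j+3) * a j - ah j * l (j+2) = 0 \<and> l (j+3) * b j - bh j * l (j+1) = 0 \<and> l (j+3) * c j - ch j * l j = 0"
      using indep3 by blast
    thus "l (j+3) * a j = ah j * l (j+2) \<and> l (j+3) * b j = bh j * l (j+1) \<and> l (j+3) * c j = ch j * l j"
      by simp
  qed
  have c1: "l (i+4) * a (i+1) = ah (i+1) * l (i+3)" "l (i+4) * c (i+1) = ch (i+1) * l (i+1)"
    using coef[of "i+1"] i by (simp_all add: add.assoc)
  have c2: "l (i+3) * b i = bh i * l (i+1)" using coef[of i] i by simp
  have "c (i+1) = ch (i+1)" using c1(2) per l(2)[of "i+1"] by simp
  moreover have "a (i+1) * b i = ah (i+1) * bh i"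
  proof -
    have "l (i+1) * l (i+3) * (a (i+1) * b i) = (l (i+4) * a (i+1)) * (l (i+3) * b i)"
      using per by (simp add: algebra_simps)
    also have "\<dots> = l (i+1) * l (i+3) * (ah (i+1) * bh i)" using c1(1) c2 by (simp add: algebra_simps)
    finally show ?thesis using l(2)[of "i+1"] l(2)[of "i+3"] by simp
  qed
  ultimately show "ch (i + 1) + ah (i + 1) * bh i = c (i + 1) + a (i + 1) * b i" by simp
qed

end
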